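(* Let $0<m\le L$, $\kappa=L/m$, and consider the accelerated gradient flow dynamics with $\alpha=1/L$ and constant parameters $(\beta,\gamma)$. The optimal (largest) exponential convergence rate achievable for all $f\in\mathcal{Q}_m^L$ is $\rho=1/\sqrt\kappa$, and the corresponding parameters are $\beta=1+(v-2)/\sqrt\kappa$, $\gamma=v\sqrt\kappa$, where $v\in[0,1]$. This rate is achieved by the heavy-ball dynamics ($\gamma=0$) with $v=0$ and, for $\kappa\ge4$, by Nesterov's dynamics ($\gamma=\beta$) with $v=(\sqrt\kappa-2)/(\kappa-1)$.
   Context: $\mathcal{Q}_m^L$ is the class of quadratic functions $f(x)=\tfrac12x^TQx-q^Tx$ on $\mathbb{R}^n$ with $q\in\mathbb{R}^n$, $Q=Q^T\succ0$ whose largest eigenvalue is $L$ and smallest is $m$; $x^\star$ is the minimizer. The (noiseless) accelerated gradient flow dynamics is $\ddot x+\theta\dot x+\alpha\nabla f(x+\gamma\dot x)=0$ with $\theta=1-\beta$; with $\psi=[(x-x^\star)^T,\dot x^T]^T$ this is $\dot\psi=A\psi$, $A=\begin{bmatrix}0&I\\-\alpha Q&-(\theta I+\gamma\alpha Q)\end{bmatrix}$. It is exponentially stable with rate $\rho>0$ for all $f\in\mathcal{Q}_m^L$ if, for every $f\in\mathcal{Q}_m^L$, all eigenvalues of $A$ have real part at most $-\rho$. *)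

theory Defs
  imports Complex_Main "Jordan_Normal_Form.Char_Poly"
begin

text \<open>A quadratic f(x) = 1/2 x^T Q x - q^T x on R^n is represented by its data (Q, q).\<close>

definition in_QmL :: "nat \<Rightarrow> real \<Rightarrow> real \<Rightarrow> real mat \<Rightarrow> real vec \<Rightarrow> bool" where
  "in_QmL n m L Q q \<longleftrightarrow>
     Q \<in> carrier_mat n n \<and> q \<in> carrier_vec n \<and>
     transpose_mat Q = Q \<and>
     (\<forall>x \<in> carrier_vec n. x \<noteq> 0\<^sub>v n \<longrightarrow> x \<bullet> (Q *\<^sub>v x) > 0) \<and>
     eigenvalue Q L \<and> (\<forall>\<mu>. eigenvalue Q \<mu> \<longrightarrow> \<mu> \<le> L) \<and>
     eigenvalue Q m \<and> (\<forall>\<mu>. eigenvalue Q \<mu> \<longrightarrow> m \<le> \<mu>)"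

definition agf_mat :: "real \<Rightarrow> real \<Rightarrow> real \<Rightarrow> real mat \<Rightarrow> real mat" where
  "agf_mat \<alpha> \<beta> \<gamma> Q =
     (let n = dim_row Q; \<theta> = 1 - \<beta> in
      four_block_mat (0\<^sub>m n n) (1\<^sub>m n)
                     ((- \<alpha>) \<cdot>\<^sub>m Q) (- (\<theta> \<cdot>\<^sub>m 1\<^sub>m n + (\<gamma> * \<alpha>) \<cdot>\<^sub>m Q)))"

definition agf_exp_stable ::
  "nat \<Rightarrow> real \<Rightarrow> real \<Rightarrow> real \<Rightarrow> real \<Rightarrow> real \<Rightarrow> real \<Rightarrow> bool" where
  "agf_exp_stable n m L \<alpha> \<beta> \<gamma> \<rho> \<longleftrightarrow>
     \<rho> > 0 \<and>
     (\<forall>Q q. in_QmL n m L Q q \<longrightarrow>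
        (\<forall>\<mu>::complex. eigenvalue (map_mat complex_of_real (agf_mat \<alpha> \<beta> \<gamma> Q)) \<mu>
           \<longrightarrow> Re \<mu> \<le> - \<rho>))"

end

theory Submission
  imports Defs
begin

abbreviation cQ :: "real mat \<Rightarrow> complex mat" where "cQ Q \<equiv> map_mat complex_of_real Q"

lemma agf_complex:
  assumes Q: "Q \<in> carrier_mat n n"
  shows "map_mat complex_of_real (agf_mat \<alpha> \<beta> \<gamma> Q) = four_block_mat (0\<^sub>m n n) (1\<^sub>m n)
     ((- complex_of_real \<alpha>) \<cdot>\<^sub>m cQ Q) (- (complex_of_real (1-\<beta>) \<cdot>\<^sub>m 1\<^sub>m n + complex_of_real (\<gamma>*\<alpha>) \<cdot>\<^sub>m cQ Q))"
  using Q by (intro eq_matI) (auto simp: agf_mat_def Let_def)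

lemma A_mult:
  assumes Q: "Q \<in> carrier_mat n n" and x: "x \<in> carrier_vec n" and y: "y \<in> carrier_vec n"
  shows "map_mat complex_of_real (agf_mat \<alpha> \<beta> \<gamma> Q) *\<^sub>v (x @\<^sub>v y) =
    y @\<^sub>v (- (complex_of_real \<alpha> \<cdot>\<^sub>v (cQ Q *\<^sub>v x)) - complex_of_real (1-\<beta>) \<cdot>\<^sub>v y - complex_of_real (\<gamma>*\<alpha>) \<cdot>\<^sub>v (cQ Q *\<^sub>v y))"
  unfolding agf_complex[OF Q]
  apply (subst four_block_mat_mult_vec[of "0\<^sub>m n n" n n "1\<^sub>m n" n _ n])
  using Q x y apply (auto)
  apply (intro eq_vecI) apply (auto simp: algebra_simps)
  apply (subst add_scalar_prod_distrib[of _ n]) apply (auto simp: algebra_simps intro!: carrier_vecI)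
  done

lemma Re_cQ_mult:
  assumes Q: "Q \<in> carrier_mat n n" and x: "x \<in> carrier_vec n" and i: "i < n"
  shows "Re ((cQ Q *\<^sub>v x) $ i) = (\<Sum>j<n. Q $$ (i,j) * Re (x $ j))"
    and "Im ((cQ Q *\<^sub>v x) $ i) = (\<Sum>j<n. Q $$ (i,j) * Im (x $ j))"
  using Q x i by (auto simp: scalar_prod_def Re_sum Im_sum atLeast0LessThan intro!: sum.cong)

lemma sym_complex_ev:
  assumes Q: "Q \<in> carrier_mat n n" and sym: "transpose_mat Q = Q"
    and x: "x \<in> carrier_vec n" and x0: "x \<noteq> 0\<^sub>v n" and ev: "cQ Q *\<^sub>v x = k \<cdot>\<^sub>v x"
  shows "Im k = 0 \<and> eigenvalue Q (Re k)"
proof -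
  define a where "a = (\<lambda>j. Re (x $ j))"
  define b where "b = (\<lambda>j. Im (x $ j))"
  have comp: "(cQ Q *\<^sub>v x) $ i = k * x $ i" if "i < n" for i
    using ev that x by (metis carrier_vecD index_smult_vec(1))
  have Qa: "(\<Sum>j<n. Q $$ (i,j) * a j) = Re k * a i - Im k * b i" if i: "i < n" for i
    using Re_cQ_mult(1)[OF Q x i] comp[OF i] by (simp add: a_def b_def)
  have Qb: "(\<Sum>j<n. Q $$ (i,j) * b j) = Im k * a i + Re k * b i" if i: "i < n" for i
    using Re_cQ_mult(2)[OF Q x i] comp[OF i] by (simp add: a_def b_def)
  have symQ: "Q $$ (i,j) = Q $$ (j,i)" if "i < n" "j < n" for i j
    using sym Q that by (metis carrier_matD index_transpose_mat(1))
  have "(\<Sum>i<n. b i * (\<Sum>j<n. Q $$ (i,j) * a j)) = (\<Sum>i<n. \<Sum>j<n. b i * Q $$ (i,j) * a j)"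
    by (simp add: sum_distrib_left mult.assoc)
  also have "\<dots> = (\<Sum>j<n. \<Sum>i<n. b i * Q $$ (i,j) * a j)" by (rule sum.swap)
  also have "\<dots> = (\<Sum>j<n. a j * (\<Sum>i<n. Q $$ (j,i) * b i))"
    by (auto simp: sum_distrib_left symQ intro!: sum.cong)
  finally have eq: "(\<Sum>i<n. b i * (Re k * a i - Im k * b i)) = (\<Sum>j<n. a j * (Im k * a j + Re k * b j))"
    using Qa Qb by simp
  have "Im k * (\<Sum>i<n. a i ^ 2 + b i ^ 2) = 0"
  proof -
    have "(\<Sum>j<n. a j * (Im k * a j + Re k * b j)) - (\<Sum>i<n. b i * (Re k * a i - Im k * b i))
       = Im k * (\<Sum>i<n. a i ^ 2 + b i ^ 2)"
      by (simp add: sum_subtractf[symmetric] sum_distrib_left power2_eq_square algebra_simps)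
    with eq show ?thesis by simp
  qed
  moreover have pos: "(\<Sum>i<n. a i ^ 2 + b i ^ 2) > 0"
  proof -
    obtain i where i: "i < n" "x $ i \<noteq> 0" using x0 x by (metis carrier_vecD eq_vecI index_zero_vec(1,2))
    hence "a i ^ 2 + b i ^ 2 > 0" by (simp add: a_def b_def complex_eq_iff add_pos_nonneg sum_power2_gt_zero_iff)
    moreover have "a i ^ 2 + b i ^ 2 \<le> (\<Sum>i<n. a i ^ 2 + b i ^ 2)"
      by (rule member_le_sum) (use i in auto)
    ultimately show ?thesis by linarith
  qed
  ultimately have Im0: "Im k = 0" by simp
  define av where "av = vec n a"
  define bv where "bv = vec n b"
  have Qav: "Q *\<^sub>v av = Re k \<cdot>\<^sub>v av"
    using Q Qa Im0 by (intro eq_vecI) (auto simp: av_def scalar_prod_def atLeast0LessThan)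
  have Qbv: "Q *\<^sub>v bv = Re k \<cdot>\<^sub>v bv"
    using Q Qb Im0 by (intro eq_vecI) (auto simp: bv_def scalar_prod_def atLeast0LessThan)
  have "av \<noteq> 0\<^sub>v n \<or> bv \<noteq> 0\<^sub>v n"
  proof (rule ccontr)
    assume "\<not> ?thesis"
    hence "\<forall>i<n. a i = 0 \<and> b i = 0" by (metis av_def bv_def index_vec index_zero_vec(1))
    hence "x = 0\<^sub>v n" using x by (intro eq_vecI) (auto simp: a_def b_def complex_eq_iff)
    with x0 show False by simp
  qed
  hence "eigenvalue Q (Re k)"
    using Qav Qbv Q unfolding eigenvalue_def eigenvector_def
    by (metis av_def bv_def carrier_matD(1) vec_carrier)
  with Im0 show ?thesis by simp
qed

lemma smult_append: "k \<cdot>\<^sub>v (x @\<^sub>v y) = (k \<cdot>\<^sub>v x) @\<^sub>v (k \<cdot>\<^sub>v y)"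
  by (intro eq_vecI) auto

lemma cQ_real_ev:
  assumes Q: "Q \<in> carrier_mat n n" and x: "x \<in> carrier_vec n" and ev: "Q *\<^sub>v x = c \<cdot>\<^sub>v x"
  shows "cQ Q *\<^sub>v map_vec complex_of_real x = complex_of_real c \<cdot>\<^sub>v map_vec complex_of_real x"
proof (intro eq_vecI)
  fix i assume "i < dim_vec (complex_of_real c \<cdot>\<^sub>v map_vec complex_of_real x)"
  hence i: "i < n" using x by auto
  have "(Q *\<^sub>v x) $ i = c * x $ i" using ev i x by (metis carrier_vecD index_smult_vec(1))
  hence "(\<Sum>j<n. Q $$ (i,j) * x $ j) = c * x $ i" using Q x i by (auto simp: scalar_prod_def atLeast0LessThan)
  hence "complex_of_real (\<Sum>j<n. Q $$ (i,j) * x $ j) = complex_of_real (c * x $ i)" by simp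
  thus "(cQ Q *\<^sub>v map_vec complex_of_real x) $ i = (complex_of_real c \<cdot>\<^sub>v map_vec complex_of_real x) $ i"
    using Q x i by (auto simp: scalar_prod_def atLeast0LessThan)
qed (use Q x in auto)

lemma root_is_ev:
  assumes Q: "Q \<in> carrier_mat n n" and x: "x \<in> carrier_vec n" and x0: "x \<noteq> 0\<^sub>v n"
    and ev: "Q *\<^sub>v x = c \<cdot>\<^sub>v x"
    and root: "s^2 + (complex_of_real (1-\<beta>) + complex_of_real (\<gamma>*\<alpha>*c)) * s + complex_of_real (\<alpha>*c) = 0"
  shows "eigenvalue (map_mat complex_of_real (agf_mat \<alpha> \<beta> \<gamma> Q)) s"
proof -
  define xc where "xc = map_vec complex_of_real x"
  have xc: "xc \<in> carrier_vec n" using x by (simp add: xc_def)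
  have Qxc: "cQ Q *\<^sub>v xc = complex_of_real c \<cdot>\<^sub>v xc" using cQ_real_ev[OF Q x ev] by (simp add: xc_def)
  have Qsxc: "cQ Q *\<^sub>v (s \<cdot>\<^sub>v xc) = (s * complex_of_real c) \<cdot>\<^sub>v xc"
    using mult_mat_vec[of "cQ Q" n n xc s] Q xc Qxc by (auto simp: smult_smult_assoc)
  have xc0: "xc \<noteq> 0\<^sub>v n"
  proof
    assume "xc = 0\<^sub>v n"
    hence "\<forall>i<n. xc $ i = 0" by simp
    hence "x = 0\<^sub>v n" using x by (intro eq_vecI) (auto simp: xc_def)
    with x0 show False by simp
  qed
  have s2: "s^2 = - ((complex_of_real (1-\<beta>) + complex_of_real (\<gamma>*\<alpha>*c)) * s) - complex_of_real (\<alpha>*c)"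
    using root by (simp add: algebra_simps add_eq_0_iff2 eq_neg_iff_add_eq_0)
  have "map_mat complex_of_real (agf_mat \<alpha> \<beta> \<gamma> Q) *\<^sub>v (xc @\<^sub>v (s \<cdot>\<^sub>v xc)) = s \<cdot>\<^sub>v (xc @\<^sub>v (s \<cdot>\<^sub>v xc))"
    unfolding A_mult[OF Q xc smult_carrier_vec[THEN iffD2, OF xc]] smult_append Qxc Qsxc
  proof (rule arg_cong[where f="\<lambda>v. (s \<cdot>\<^sub>v xc) @\<^sub>v v"], intro eq_vecI)
    fix i assume "i < dim_vec (s \<cdot>\<^sub>v (s \<cdot>\<^sub>v xc))"
    hence i: "i < n" using xc by auto
    have "s * (s * xc $ i) = s^2 * xc $ i" by (simp add: power2_eq_square)
    also have "\<dots> = (- ((complex_of_real (1-\<beta>) + complex_of_real (\<gamma>*\<alpha>*c)) * s) - complex_of_real (\<alpha>*c)) * xc $ i"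
      by (simp only: s2)
    finally show "(- (complex_of_real \<alpha> \<cdot>\<^sub>v (complex_of_real c \<cdot>\<^sub>v xc)) - complex_of_real (1 - \<beta>) \<cdot>\<^sub>v (s \<cdot>\<^sub>v xc) -
         complex_of_real (\<gamma> * \<alpha>) \<cdot>\<^sub>v ((s * complex_of_real c) \<cdot>\<^sub>v xc)) $ i = (s \<cdot>\<^sub>v (s \<cdot>\<^sub>v xc)) $ i"
      using i xc by (simp add: algebra_simps)
  qed (use xc in auto)
  moreover have "xc @\<^sub>v (s \<cdot>\<^sub>v xc) \<in> carrier_vec (n+n)" using xc by auto
  moreover have "xc @\<^sub>v (s \<cdot>\<^sub>v xc) \<noteq> 0\<^sub>v (n+n)"
  proof
    assume "xc @\<^sub>v (s \<cdot>\<^sub>v xc) = 0\<^sub>v (n+n)"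
    hence "\<forall>i<n. xc $ i = 0" using xc
      by (metis (no_types, lifting) carrier_vecD index_append_vec(1) index_zero_vec(1) trans_less_add1)
    hence "xc = 0\<^sub>v n" using xc by (intro eq_vecI) auto
    thus False using xc0 by simp
  qed
  ultimately show ?thesis using Q unfolding eigenvalue_def eigenvector_def
    using agf_complex[OF Q, of \<alpha> \<beta> \<gamma>] carrier_matD(1)[OF Q] by (simp, blast)
qed

lemma lin1: fixes a g m q t x :: complex
  assumes "a*q + g*(m*q) = 0" "-(a*q) - t*(m*x) - g*(m*q) = m*(m*x)" shows "(m^2 + t*m)*x = 0"
proof -
  have "(m^2 + t*m)*x = -(a*q + g*(m*q)) + ((-(a*q) - t*(m*x) - g*(m*q)) - m*(m*x)) * (-1)"
    by (simp add: algebra_simps power2_eq_square)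
  thus ?thesis using assms by simp
qed
lemma lin2: fixes a g m q t x ga :: complex
  assumes "-(a*q) - t*(m*x) - ga*(m*q) = m*(m*x)" "ga = g * a" shows "a*(1+g*m)*q = -(m^2+t*m)*x"
proof -
  have "a*(1+g*m)*q + (m^2+t*m)*x = -((-(a*q) - t*(m*x) - ga*(m*q)) - m*(m*x))"
    using assms(2) by (simp add: algebra_simps power2_eq_square)
  also have "\<dots> = 0" using assms(1) by simp
  finally have "a*(1+g*m)*q = -((m^2+t*m)*x)" by (simp add: eq_neg_iff_add_eq_0)
  thus ?thesis by (simp add: algebra_simps)
qed
lemma lin3: fixes m t g a k:: complex
  shows "m^2 + (t + g*a*k)*m + a*k = (m^2 + t*m) + k*(a*(1+g*m))"
  by (simp add: algebra_simps power2_eq_square)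

lemma ev_char:
  assumes Q: "Q \<in> carrier_mat n n" and sym: "transpose_mat Q = Q" and \<alpha>: "\<alpha> \<noteq> 0"
    and c0: "eigenvalue Q c0"
    and ev: "eigenvalue (map_mat complex_of_real (agf_mat \<alpha> \<beta> \<gamma> Q)) \<mu>"
  shows "\<exists>c. eigenvalue Q c \<and>
    \<mu>^2 + (complex_of_real (1-\<beta>) + complex_of_real (\<gamma>*\<alpha>*c)) * \<mu> + complex_of_real (\<alpha>*c) = 0"
proof -
  have dimA: "dim_row (map_mat complex_of_real (agf_mat \<alpha> \<beta> \<gamma> Q)) = n + n"
    using Q by (simp add: agf_mat_def Let_def)
  obtain w where w: "w \<in> carrier_vec (n+n)" "w \<noteq> 0\<^sub>v (n+n)"
    and Aw: "map_mat complex_of_real (agf_mat \<alpha> \<beta> \<gamma> Q) *\<^sub>v w = \<mu> \<cdot>\<^sub>v w"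
    using ev unfolding eigenvalue_def eigenvector_def dimA by blast
  define x where "x = vec_first w n"
  define y where "y = vec_last w n"
  have x: "x \<in> carrier_vec n" and y: "y \<in> carrier_vec n" by (auto simp: x_def y_def)
  have wxy: "w = x @\<^sub>v y" unfolding x_def y_def by (rule vec_first_last_append[symmetric, OF w(1)])
  define \<theta> where "\<theta> = complex_of_real (1-\<beta>)"
  define Qx where "Qx = cQ Q *\<^sub>v x"
  have Qx: "Qx \<in> carrier_vec n" unfolding Qx_def using Q x by (intro mult_mat_vec_carrier[of _ n n]) auto
  have "y @\<^sub>v (- (complex_of_real \<alpha> \<cdot>\<^sub>v (cQ Q *\<^sub>v x)) - complex_of_real (1-\<beta>) \<cdot>\<^sub>v y - complex_of_real (\<gamma>*\<alpha>) \<cdot>\<^sub>v (cQ Q *\<^sub>v y))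
     = (\<mu> \<cdot>\<^sub>v x) @\<^sub>v (\<mu> \<cdot>\<^sub>v y)"
    using Aw unfolding wxy A_mult[OF Q x y] smult_append .
  hence yeq0: "y = \<mu> \<cdot>\<^sub>v x \<and> (- (complex_of_real \<alpha> \<cdot>\<^sub>v (cQ Q *\<^sub>v x)) - complex_of_real (1-\<beta>) \<cdot>\<^sub>v y - complex_of_real (\<gamma>*\<alpha>) \<cdot>\<^sub>v (cQ Q *\<^sub>v y) = \<mu> \<cdot>\<^sub>v y)"
    using append_vec_eq[OF y smult_carrier_vec[THEN iffD2, OF x]] by blast
  hence yeq: "y = \<mu> \<cdot>\<^sub>v x" and
    eq2: "- (complex_of_real \<alpha> \<cdot>\<^sub>v (cQ Q *\<^sub>v x)) - complex_of_real (1-\<beta>) \<cdot>\<^sub>v y - complex_of_real (\<gamma>*\<alpha>) \<cdot>\<^sub>v (cQ Q *\<^sub>v y) = \<mu> \<cdot>\<^sub>v y"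
    by blast+
  have Qy: "cQ Q *\<^sub>v y = \<mu> \<cdot>\<^sub>v Qx" unfolding yeq Qx_def using Q x by (intro mult_mat_vec[of _ n n]) simp_all
  have comp: "- (complex_of_real \<alpha> * Qx $ i) - \<theta> * (\<mu> * x $ i) - complex_of_real (\<gamma>*\<alpha>) * (\<mu> * Qx $ i) = \<mu> * (\<mu> * x $ i)"
    if i: "i < n" for i
  proof -
    have "(- (complex_of_real \<alpha> \<cdot>\<^sub>v Qx) - complex_of_real (1-\<beta>) \<cdot>\<^sub>v y - complex_of_real (\<gamma>*\<alpha>) \<cdot>\<^sub>v (\<mu> \<cdot>\<^sub>v Qx)) $ i = (\<mu> \<cdot>\<^sub>v y) $ i"
      using eq2[unfolded Qy Qx_def[symmetric]] by simp
    hence "(- (complex_of_real \<alpha> \<cdot>\<^sub>v Qx) - \<theta> \<cdot>\<^sub>v (\<mu> \<cdot>\<^sub>v x) - complex_of_real (\<gamma>*\<alpha>) \<cdot>\<^sub>v (\<mu> \<cdot>\<^sub>v Qx)) $ i = (\<mu> \<cdot>\<^sub>v (\<mu> \<cdot>\<^sub>v x)) $ i"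
      unfolding yeq \<theta>_def .
    moreover have "dim_vec x = n" "dim_vec Qx = n" using x Qx by auto
    ultimately show ?thesis using i by simp
  qed
  have x0: "x \<noteq> 0\<^sub>v n"
  proof
    assume x00: "x = 0\<^sub>v n"
    have "w = 0\<^sub>v (n+n)"
    proof (intro eq_vecI)
      fix i assume "i < dim_vec (0\<^sub>v (n+n) :: complex vec)"
      hence i: "i < n + n" by simp
      show "w $ i = 0\<^sub>v (n+n) $ i"
        using i x y unfolding wxy yeq x00 by (cases "i < n") auto
    qed (use w in auto)
    with w show False by simp
  qed
  have "\<not> (\<forall>i<n. x $ i = 0)"
  proof
    assume "\<forall>i<n. x $ i = 0"
    hence "x = 0\<^sub>v n" using x by (intro eq_vecI) auto
    with x0 show False by simp
  qed
  then obtain i0 where i0: "i0 < n" "x $ i0 \<noteq> 0" by blast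
  have ga: "complex_of_real (\<gamma>*\<alpha>) = complex_of_real \<gamma> * complex_of_real \<alpha>" by simp
  show ?thesis
  proof (cases "1 + complex_of_real \<gamma> * \<mu> = 0")
    case True
    have "complex_of_real \<alpha> * Qx $ i0 + complex_of_real (\<gamma>*\<alpha>) * (\<mu> * Qx $ i0)
        = complex_of_real \<alpha> * Qx $ i0 * (1 + complex_of_real \<gamma> * \<mu>)" by (simp add: algebra_simps)
    also have "\<dots> = 0" using True by simp
    finally have "(\<mu>^2 + \<theta> * \<mu>) * x $ i0 = 0" using comp[OF i0(1)]
      by (rule lin1)
    hence m0: "\<mu>^2 + \<theta> * \<mu> = 0" using i0 by simp
    have "\<mu>^2 + (\<theta> + complex_of_real (\<gamma>*\<alpha>*c0)) * \<mu> + complex_of_real (\<alpha>*c0)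
       = (\<mu>^2 + \<theta> * \<mu>) + complex_of_real (\<alpha>*c0) * (1 + complex_of_real \<gamma> * \<mu>)"
      by (simp add: algebra_simps)
    also have "\<dots> = 0" using m0 True by simp
    finally show ?thesis using c0 unfolding \<theta>_def by blast
  next
    case False
    define k where "k = - (\<mu>^2 + \<theta> * \<mu>) / (complex_of_real \<alpha> * (1 + complex_of_real \<gamma> * \<mu>))"
    have den: "complex_of_real \<alpha> * (1 + complex_of_real \<gamma> * \<mu>) \<noteq> 0" using False \<alpha> by simp
    have "cQ Q *\<^sub>v x = k \<cdot>\<^sub>v x"
    proof (intro eq_vecI)
      fix i assume "i < dim_vec (k \<cdot>\<^sub>v x)"
      hence i: "i < n" using x by simp
      have "complex_of_real \<alpha> * (1 + complex_of_real \<gamma> * \<mu>) * Qx $ i = - (\<mu>^2 + \<theta> * \<mu>) * x $ i"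
        using comp[OF i] ga by (rule lin2)
      hence "Qx $ i = k * x $ i" using den unfolding k_def by (simp add: field_simps)
      thus "(cQ Q *\<^sub>v x) $ i = (k \<cdot>\<^sub>v x) $ i" using i x by (simp add: Qx_def)
    qed (use Q x in auto)
    from sym_complex_ev[OF Q sym x x0 this] have k: "Im k = 0" "eigenvalue Q (Re k)" by auto
    have kr: "complex_of_real (Re k) = k" using k(1) by (simp add: complex_eq_iff)
    have "\<mu>^2 + (\<theta> + complex_of_real (\<gamma>*\<alpha>*Re k)) * \<mu> + complex_of_real (\<alpha>*Re k)
       = (\<mu>^2 + \<theta> * \<mu>) + k * (complex_of_real \<alpha> * (1 + complex_of_real \<gamma> * \<mu>))"
    proof -
      have "complex_of_real (\<gamma>*\<alpha>*Re k) = complex_of_real \<gamma> * complex_of_real \<alpha> * k"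
           "complex_of_real (\<alpha>*Re k) = complex_of_real \<alpha> * k" using kr by (metis of_real_mult)+
      thus ?thesis using lin3 by metis
    qed
    also have "\<dots> = 0" using den unfolding k_def by simp
    finally show ?thesis using k(2) unfolding \<theta>_def by blast
  qed
qed

lemma quad_ReIm:
  fixes s :: complex and p q :: real
  assumes "s^2 + of_real p * s + of_real q = 0"
  shows "Re s ^ 2 - Im s ^ 2 + p * Re s + q = 0" "Im s * (2 * Re s + p) = 0"
proof -
  have "Re (s^2 + of_real p * s + of_real q) = 0" "Im (s^2 + of_real p * s + of_real q) = 0"
    using assms by simp_all
  thus "Re s ^ 2 - Im s ^ 2 + p * Re s + q = 0" "Im s * (2 * Re s + p) = 0"
    by (simp_all add: power2_eq_square algebra_simps)
qed

lemma R1: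
  fixes s :: complex and p q e :: real
  assumes eq: "s^2 + of_real p * s + of_real q = 0" and p: "p \<ge> 2*e" and R: "e^2 - p*e + q \<ge> 0"
  shows "Re s \<le> -e"
proof (cases "Im s = 0")
  case True
  with quad_ReIm(1)[OF eq] have a: "Re s ^ 2 + p * Re s + q = 0" by simp
  show ?thesis
  proof (rule ccontr)
    assume "\<not> ?thesis"
    hence t: "Re s + e > 0" by simp
    have "(Re s + e)^2 + (p - 2*e) * (Re s + e) + (e^2 - p*e + q) = Re s ^ 2 + p * Re s + q"
      by (simp add: power2_eq_square algebra_simps)
    moreover have "(Re s + e)^2 > 0" using t by simp
    moreover have "(p - 2*e) * (Re s + e) \<ge> 0" using t p by simp
    ultimately show False using a R by linarith
  qed
next
  case False
  with quad_ReIm(2)[OF eq] have "2 * Re s + p = 0" by simp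
  thus ?thesis using p by linarith
qed

lemma roots2:
  fixes p q :: real
  defines "d \<equiv> csqrt (complex_of_real (p^2 - 4*q))"
  shows "((-of_real p + d)/2)^2 + of_real p * ((-of_real p + d)/2) + of_real q = 0"
    "((-of_real p - d)/2)^2 + of_real p * ((-of_real p - d)/2) + of_real q = 0"
    "((-of_real p + d)/2) * ((-of_real p - d)/2) = of_real q"
    "((-of_real p + d)/2) + ((-of_real p - d)/2) = - of_real p"
proof -
  have dd: "d^2 = of_real p ^ 2 - 4 * of_real q" unfolding d_def by simp
  have dd2: "d*d = of_real p * of_real p - 4 * of_real q" using dd by (simp add: power2_eq_square)
  have e1: "((-of_real p + d)/2)^2 + of_real p * ((-of_real p + d)/2) + of_real q = (d*d - (of_real p * of_real p - 4 * of_real q))/4"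
    by (simp add: field_simps power2_eq_square)
  have e2: "((-of_real p - d)/2)^2 + of_real p * ((-of_real p - d)/2) + of_real q = (d*d - (of_real p * of_real p - 4 * of_real q))/4"
    by (simp add: field_simps power2_eq_square)
  have e3: "((-of_real p + d)/2) * ((-of_real p - d)/2) = of_real q - (d*d - (of_real p * of_real p - 4 * of_real q))/4"
    by (simp add: field_simps power2_eq_square)
  show "((-of_real p + d)/2)^2 + of_real p * ((-of_real p + d)/2) + of_real q = 0"
    "((-of_real p - d)/2)^2 + of_real p * ((-of_real p - d)/2) + of_real q = 0"
    "((-of_real p + d)/2) * ((-of_real p - d)/2) = of_real q"
    using e1 e2 e3 dd2 by simp_all
  show "((-of_real p + d)/2) + ((-of_real p - d)/2) = - of_real p" by (simp add: field_simps)
qed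

definition dg :: "real \<Rightarrow> real \<Rightarrow> nat \<Rightarrow> real" where "dg m L i = (if i = 0 then L else m)"
definition Qd :: "nat \<Rightarrow> real \<Rightarrow> real \<Rightarrow> real mat" where
  "Qd n m L = mat n n (\<lambda>(i,j). if i = j then dg m L i else 0)"

lemma Qd_carrier: "Qd n m L \<in> carrier_mat n n" by (simp add: Qd_def)
lemma Qd_dim[simp]: "dim_row (Qd n m L) = n" "dim_col (Qd n m L) = n" by (simp_all add: Qd_def)

lemma Qd_mult: assumes x: "x \<in> carrier_vec n" and i: "i < n"
  shows "(Qd n m L *\<^sub>v x) $ i = dg m L i * x $ i"
proof -
  have "(Qd n m L *\<^sub>v x) $ i = (\<Sum>j\<in>{0..<n}. (if i = j then dg m L i else 0) * x $ j)"
    using x i by (simp add: Qd_def scalar_prod_def)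
  also have "\<dots> = (\<Sum>j\<in>{0..<n}. if i = j then dg m L i * x $ j else 0)"
    by (rule sum.cong) auto
  also have "\<dots> = dg m L i * x $ i" using i by simp
  finally show ?thesis .
qed

lemma Qd_unit: assumes j: "j < n"
  shows "Qd n m L *\<^sub>v unit_vec n j = dg m L j \<cdot>\<^sub>v unit_vec n j"
  by (intro eq_vecI) (use j in \<open>auto simp: Qd_mult Qd_def\<close>)

lemma unit_nz: "j < n \<Longrightarrow> unit_vec n j \<noteq> (0\<^sub>v n :: 'a::zero_neq_one vec)"
  by (metis index_unit_vec(1) index_zero_vec(1) zero_neq_one)

lemma Qd_in:
  assumes m: "0 < m" "m \<le> L" and n: "1 \<le> n" and n2: "m < L \<Longrightarrow> 2 \<le> n"
  shows "in_QmL n m L (Qd n m L) (0\<^sub>v n)"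
proof -
  have dpos: "dg m L i \<ge> m" for i using m by (simp add: dg_def)
  have sym: "transpose_mat (Qd n m L) = Qd n m L" by (intro eq_matI) (auto simp: Qd_def)
  have pd: "x \<bullet> (Qd n m L *\<^sub>v x) > 0" if x: "x \<in> carrier_vec n" "x \<noteq> 0\<^sub>v n" for x
  proof -
    obtain i where i: "i < n" "x $ i \<noteq> 0" using x by (metis carrier_vecD eq_vecI index_zero_vec(1,2))
    have "x \<bullet> (Qd n m L *\<^sub>v x) = (\<Sum>j\<in>{0..<n}. dg m L j * (x $ j)^2)"
      unfolding scalar_prod_def using x
      by (intro sum.cong) (auto simp: Qd_mult power2_eq_square simp del: index_mult_mat_vec)
    moreover have "dg m L i * (x $ i)^2 \<le> (\<Sum>j\<in>{0..<n}. dg m L j * (x $ j)^2)"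
      by (rule member_le_sum) (use i dpos m in \<open>auto intro!: mult_nonneg_nonneg order_trans[OF _ dpos]\<close>)
    moreover have "dg m L i * (x $ i)^2 > 0" using i dpos[of i] m by (simp add: order_less_le_trans[OF _ dpos])
    ultimately show ?thesis by linarith
  qed
  have evb: "\<mu> = m \<or> \<mu> = L" if evmu: "eigenvalue (Qd n m L) \<mu>" for \<mu>
  proof -
    obtain x where x: "x \<in> carrier_vec n" "x \<noteq> 0\<^sub>v n" "Qd n m L *\<^sub>v x = \<mu> \<cdot>\<^sub>v x"
      using evmu unfolding eigenvalue_def eigenvector_def by auto
    obtain i where i: "i < n" "x $ i \<noteq> 0" using x by (metis carrier_vecD eq_vecI index_zero_vec(1,2))
    have "dg m L i * x $ i = \<mu> * x $ i" using Qd_mult[OF x(1) i(1)] x(3) i x(1)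
      by (metis carrier_vecD index_smult_vec(1))
    hence "\<mu> = dg m L i" using i by simp
    thus ?thesis by (auto simp: dg_def)
  qed
  have evL: "eigenvalue (Qd n m L) L"
    unfolding eigenvalue_def eigenvector_def
    using Qd_unit[of 0 n m L] unit_nz[of 0 n, where 'a=real] n by (intro exI[of _ "unit_vec n 0"]) (auto simp: dg_def)
  define j0 where "j0 = (if 2 \<le> n then 1 else 0::nat)"
  have j0: "j0 < n" "dg m L j0 = m" using n n2 m by (auto simp: j0_def dg_def) (metis antisym_conv1)
  have evm: "eigenvalue (Qd n m L) m"
    unfolding eigenvalue_def eigenvector_def
    using Qd_unit[OF j0(1), of m L] unit_nz[OF j0(1), where 'a=real] j0 by (intro exI[of _ "unit_vec n j0"]) auto
  show ?thesis unfolding in_QmL_def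
    using Qd_carrier sym pd evL evm evb m by fastforce
qed

lemma in_QmL_D:
  assumes "in_QmL n m L Q q"
  shows "Q \<in> carrier_mat n n" "transpose_mat Q = Q" "eigenvalue Q m" "eigenvalue Q L"
    "\<And>c. eigenvalue Q c \<Longrightarrow> m \<le> c \<and> c \<le> L"
  using assms unfolding in_QmL_def by auto

lemma ev_real_vec:
  assumes "eigenvalue Q c" "Q \<in> carrier_mat n n"
  obtains x where "x \<in> carrier_vec n" "x \<noteq> 0\<^sub>v n" "Q *\<^sub>v x = c \<cdot>\<^sub>v x"
  using assms unfolding eigenvalue_def eigenvector_def by auto

lemma quad_conv:
  "s^2 + (complex_of_real a + complex_of_real b) * s + complex_of_real d = 0 \<longleftrightarrow>
   s^2 + complex_of_real (a + b) * s + complex_of_real d = 0"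
  by simp

lemma suff_gen:
  assumes m: "0 < m" "m \<le> L" and r: "r > 0" "L = r^2 * m" and v: "0 \<le> v" "v \<le> 1"
  shows "agf_exp_stable n m L (1/L) (1 + (v-2)/r) (v*r) (1/r)"
  unfolding agf_exp_stable_def
proof (intro conjI allI impI)
  show "1/r > 0" using r by simp
  fix Q q \<mu> assume inQ: "in_QmL n m L Q q"
    and ev: "eigenvalue (map_mat complex_of_real (agf_mat (1/L) (1 + (v-2)/r) (v*r) Q)) \<mu>"
  note D = in_QmL_D[OF inQ]
  have L0: "1/L \<noteq> 0" using m by simp
  obtain c where c: "eigenvalue Q c"
    and eq: "\<mu>^2 + (complex_of_real (1-(1 + (v-2)/r)) + complex_of_real (v*r*(1/L)*c)) * \<mu> + complex_of_real ((1/L)*c) = 0"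
    using ev_char[OF D(1) D(2) L0 D(3) ev] by blast
  have cb: "m \<le> c" "c \<le> L" using D(5)[OF c] by auto
  define p where "p = (1-(1 + (v-2)/r)) + v*r*(1/L)*c"
  have eq': "\<mu>^2 + complex_of_real p * \<mu> + complex_of_real ((1/L)*c) = 0"
    using eq unfolding p_def quad_conv .
  have pe: "p - 2*(1/r) = v * (c/m - 1) / r"
    unfolding p_def using r m by (simp add: field_simps power2_eq_square)
  have Re: "(1/r)^2 - p*(1/r) + (1/L)*c = (1-v) * (c/m - 1) / r^2"
    unfolding p_def using r m by (simp add: field_simps power2_eq_square)
  have cm: "c/m - 1 \<ge> 0" using cb m by (simp add: field_simps)
  have "p \<ge> 2*(1/r)" using pe cm v r by (smt (verit) divide_nonneg_pos mult_nonneg_nonneg)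
  moreover have "(1/r)^2 - p*(1/r) + (1/L)*c \<ge> 0" unfolding Re using cm v r by simp
  ultimately show "Re \<mu> \<le> - (1/r)" by (rule R1[OF eq'])
qed

lemma root_stable:
  assumes st: "agf_exp_stable n m L \<alpha> \<beta> \<gamma> \<rho>" and inQ: "in_QmL n m L Q q0"
    and c: "eigenvalue Q c"
    and s: "s^2 + complex_of_real ((1-\<beta>) + \<gamma>*\<alpha>*c) * s + complex_of_real (\<alpha>*c) = 0"
  shows "Re s \<le> -\<rho>"
proof -
  note D = in_QmL_D[OF inQ]
  obtain x where x: "x \<in> carrier_vec n" "x \<noteq> 0\<^sub>v n" "Q *\<^sub>v x = c \<cdot>\<^sub>v x"
    using ev_real_vec[OF c D(1)] .
  have "eigenvalue (map_mat complex_of_real (agf_mat \<alpha> \<beta> \<gamma> Q)) s"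
    by (rule root_is_ev[OF D(1) x]) (use s in \<open>simp only: quad_conv\<close>)
  thus ?thesis using st inQ unfolding agf_exp_stable_def by blast
qed

lemma two_roots_bound:
  assumes st: "agf_exp_stable n m L \<alpha> \<beta> \<gamma> \<rho>" and inQ: "in_QmL n m L Q q0"
    and c: "eigenvalue Q c"
  obtains s1 s2 where "Re s1 \<le> -\<rho>" "Re s2 \<le> -\<rho>" "s1 * s2 = complex_of_real (\<alpha>*c)"
    "s1 + s2 = - complex_of_real ((1-\<beta>) + \<gamma>*\<alpha>*c)"
  using roots2[of "(1-\<beta>) + \<gamma>*\<alpha>*c" "\<alpha>*c"] root_stable[OF st inQ c] by blast

lemma exQ:
  assumes m: "0 < m" "m \<le> L" and n: "1 \<le> n" and n2: "m < L \<Longrightarrow> 2 \<le> n"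
  shows "\<exists>Q q. in_QmL n m L Q q"
  using Qd_in[OF assms] by blast

lemma upper_gen:
  assumes m: "0 < m" "m \<le> L" and n: "1 \<le> n" and n2: "m < L \<Longrightarrow> 2 \<le> n"
    and r: "r > 0" "L = r^2 * m" and st: "agf_exp_stable n m L (1/L) \<beta> \<gamma> \<rho>"
  shows "\<rho> \<le> 1/r"
proof -
  obtain Q q where inQ: "in_QmL n m L Q q" using exQ[OF m n n2] by blast
  have \<rho>: "\<rho> > 0" using st unfolding agf_exp_stable_def by simp
  obtain s1 s2 where s: "Re s1 \<le> -\<rho>" "Re s2 \<le> -\<rho>" "s1 * s2 = complex_of_real ((1/L)*m)"
    using two_roots_bound[OF st inQ in_QmL_D(3)[OF inQ]] by blast
  have "cmod s1 \<ge> \<rho>" "cmod s2 \<ge> \<rho>" using s abs_Re_le_cmod[of s1] abs_Re_le_cmod[of s2] by linarith+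
  hence "\<rho> * \<rho> \<le> cmod s1 * cmod s2" using \<rho> by (simp add: mult_mono)
  also have "\<dots> = cmod (complex_of_real ((1/L)*m))" using s(3) by (simp only: norm_mult[symmetric])
  also have "\<dots> = (1/L)*m" using m by (simp only: norm_of_real) simp
  also have "\<dots> = (1/r)^2" using r m by (simp add: field_simps power2_eq_square)
  finally have "\<rho>^2 \<le> (1/r)^2" by (simp add: power2_eq_square)
  thus ?thesis using \<rho> r by (simp add: power_mono_iff[symmetric])
qed

lemma real_root:
  fixes p e :: real
  assumes e: "e > 0" and R: "e^2 - p*e + 1 < 0"
  shows "((-p + sqrt (p^2-4))/2)^2 + p * ((-p + sqrt (p^2-4))/2) + 1 = 0"
    "(-p + sqrt (p^2-4))/2 > -e"
proof -
  have pe: "p*e > e^2 + 1" using R by simp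
  have "e^2 + 1 \<ge> 2*e" using sum_squares_bound[of e 1] by simp
  hence pe2: "p*e > 2*e" using pe by linarith
  hence p2: "p > 2" using e by (simp add: mult.commute)
  hence "p^2 > 2^2" by (intro power_strict_mono) auto
  hence d: "p^2 - 4 \<ge> 0" by simp
  define sq where "sq = sqrt (p^2 - 4)"
  have sq2: "sq^2 = p^2 - 4" unfolding sq_def using d by simp
  show "((-p + sqrt (p^2-4))/2)^2 + p * ((-p + sqrt (p^2-4))/2) + 1 = 0"
    unfolding sq_def[symmetric] using sq2 by (simp add: field_simps power2_eq_square)
  have "p - 2*e < sq"
  proof (cases "p - 2*e < 0")
    case True thus ?thesis unfolding sq_def by (smt (verit) real_sqrt_ge_zero d)
  next
    case False
    have "(p - 2*e)^2 < p^2 - 4" using pe by (simp add: power2_eq_square algebra_simps)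
    thus ?thesis unfolding sq_def by (rule real_less_rsqrt)
  qed
  thus "(-p + sqrt (p^2-4))/2 > -e" unfolding sq_def by simp
qed

lemma char_gen:
  assumes m: "0 < m" "m < L" and n: "2 \<le> n"
    and r: "r > 0" "L = r^2 * m" and st: "agf_exp_stable n m L (1/L) \<beta> \<gamma> (1/r)"
  shows "\<exists>v\<in>{0..1}. \<beta> = 1 + (v-2)/r \<and> \<gamma> = v*r"
proof -
  obtain Q q where inQ: "in_QmL n m L Q q" using exQ[of m L n] m n by auto
  have r1: "r > 1"
  proof (rule ccontr)
    assume "\<not> r > 1"
    hence "r^2 \<le> 1" using r by (simp add: power_le_one)
    hence "L \<le> m" using r m by (simp add: mult_le_cancel_right1)
    thus False using m by simp
  qed
  define e where "e = 1/r"
  have e: "e > 0" "e < 1" using r r1 by (auto simp: e_def)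
  obtain s1 s2 where s: "Re s1 \<le> -e" "Re s2 \<le> -e" "s1 * s2 = complex_of_real ((1/L)*m)"
    "s1 + s2 = - complex_of_real ((1-\<beta>) + \<gamma>*(1/L)*m)"
    using two_roots_bound[OF st inQ in_QmL_D(3)[OF inQ]] unfolding e_def by blast
  have c1: "cmod s1 \<ge> e" "cmod s2 \<ge> e" using s abs_Re_le_cmod[of s1] abs_Re_le_cmod[of s2] by linarith+
  have "cmod s1 * cmod s2 = cmod (complex_of_real ((1/L)*m))" using s(3) by (simp only: norm_mult[symmetric])
  also have "\<dots> = (1/L)*m" using m by (simp only: norm_of_real) simp
  also have "\<dots> = e * e" using r m by (simp add: e_def field_simps power2_eq_square)
  finally have prod: "cmod s1 * cmod s2 = e * e" .
  have "cmod s1 * e \<le> e * e" using prod c1 by (metis mult_left_mono norm_ge_zero)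
  hence "cmod s1 \<le> e" using e by simp
  hence re1: "Re s1 = -e" using s(1) abs_Re_le_cmod[of s1] by linarith
  have "e * cmod s2 \<le> e * e" using prod c1 by (metis mult_right_mono norm_ge_zero)
  hence "cmod s2 \<le> e" using e by simp
  hence re2: "Re s2 = -e" using s(2) abs_Re_le_cmod[of s2] by linarith
  have "Re (s1 + s2) = - ((1-\<beta>) + \<gamma>*(1/L)*m)" using s(4) by simp
  hence pm: "(1-\<beta>) + \<gamma>*(1/L)*m = 2*e" using re1 re2 by simp
  define v where "v = \<gamma> / r"
  have gam: "\<gamma> = v*r" using r by (simp add: v_def)
  have bet: "\<beta> = 1 + (v-2)/r"
  proof -
    have "\<gamma>*(1/L)*m = v/r" using r m by (simp add: gam field_simps power2_eq_square)
    with pm have "1 - \<beta> = 2/r - v/r" by (simp add: e_def)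
    thus ?thesis by (simp add: field_simps diff_divide_distrib)
  qed
  define pL where "pL = (1-\<beta>) + \<gamma>*(1/L)*L"
  have pL: "pL = (2-v)/r + v*r" unfolding pL_def using m r by (simp add: bet gam field_simps)
  obtain t1 t2 where t: "Re t1 \<le> -e" "Re t2 \<le> -e" "t1 + t2 = - complex_of_real pL"
    using two_roots_bound[OF st inQ in_QmL_D(4)[OF inQ]] unfolding e_def pL_def by blast
  have "Re t1 + Re t2 = - pL" using arg_cong[OF t(3), of Re] by simp
  hence "pL \<ge> 2*e" using t(1,2) by linarith
  moreover have "pL - 2*e = v * (r - 1/r)" using r unfolding pL e_def by (simp add: field_simps)
  ultimately have vr: "v * (r - 1/r) \<ge> 0" by linarith
  have "1/r < 1" using r1 by simp
  hence rr: "r - 1/r > 0" using r1 by linarith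
  have v0: "v \<ge> 0"
  proof (rule ccontr)
    assume "\<not> v \<ge> 0"
    hence "v * (r - 1/r) < 0" using rr by (simp add: mult_neg_pos)
    thus False using vr by linarith
  qed
  have v1: "v \<le> 1"
  proof (rule ccontr)
    assume "\<not> v \<le> 1"
    hence v1: "v > 1" by simp
    have "e^2 - pL*e + 1 = (1 - v) * (1 - e^2)" using r unfolding pL e_def by (simp add: field_simps power2_eq_square)
    also have "\<dots> < 0"
    proof -
      have "e^2 < 1^2" using e by (intro power_strict_mono) auto
      thus ?thesis using v1 by (intro mult_neg_pos) auto
    qed
    finally have R: "e^2 - pL*e + 1 < 0" .
    define s where "s = (-pL + sqrt (pL^2-4))/2"
    have sr: "s^2 + pL * s + 1 = 0" "s > -e" using real_root[OF e(1) R] unfolding s_def by auto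
    have "(complex_of_real s)^2 + complex_of_real ((1-\<beta>) + \<gamma>*(1/L)*L) * complex_of_real s + complex_of_real ((1/L)*L) = 0"
    proof -
      have "complex_of_real (s^2 + pL * s + 1) = 0" using sr by simp
      thus ?thesis using m unfolding pL_def[symmetric] by simp
    qed
    hence "Re (complex_of_real s) \<le> -(1/r)" by (rule root_stable[OF st inQ in_QmL_D(4)[OF inQ]])
    thus False using sr unfolding e_def by simp
  qed
  show ?thesis using v0 v1 bet gam by auto
qed

theorem proposition5:
  fixes m L :: real and n :: nat
  assumes "0 < m" and "m \<le> L"
    and "1 \<le> n" and "m < L \<Longrightarrow> 2 \<le> n"
  shows
    \<comment> \<open>the parameters beta = 1 + (v-2)/sqrt kappa, gamma = v sqrt kappa, v in [0,1], achieve rho = 1/sqrt kappa\<close>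
    "(\<forall>v \<in> {0..1}. agf_exp_stable n m L (1 / L)
        (1 + (v - 2) / sqrt (L / m)) (v * sqrt (L / m)) (1 / sqrt (L / m)))
     \<comment> \<open>no larger rate is achievable by any constant parameters\<close>
     \<and> (\<forall>\<beta> \<gamma> \<rho>. agf_exp_stable n m L (1 / L) \<beta> \<gamma> \<rho> \<longrightarrow> \<rho> \<le> 1 / sqrt (L / m))
     \<comment> \<open>conversely (for kappa > 1) the optimal rate forces parameters of this form\<close>
     \<and> (m < L \<longrightarrow> (\<forall>\<beta> \<gamma>. agf_exp_stable n m L (1 / L) \<beta> \<gamma> (1 / sqrt (L / m)) \<longrightarrow>
          (\<exists>v \<in> {0..1}. \<beta> = 1 + (v - 2) / sqrt (L / m) \<and> \<gamma> = v * sqrt (L / m))))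
     \<comment> \<open>heavy-ball dynamics (gamma = 0), v = 0\<close>
     \<and> agf_exp_stable n m L (1 / L) (1 + (0 - 2) / sqrt (L / m)) (0 * sqrt (L / m)) (1 / sqrt (L / m))
     \<comment> \<open>Nesterov's dynamics (gamma = beta) for kappa >= 4\<close>
     \<and> (4 \<le> L / m \<longrightarrow>
          (let v = (sqrt (L / m) - 2) / (L / m - 1) in
             v \<in> {0..1} \<and> v * sqrt (L / m) = 1 + (v - 2) / sqrt (L / m) \<and>
             agf_exp_stable n m L (1 / L)
               (1 + (v - 2) / sqrt (L / m)) (v * sqrt (L / m)) (1 / sqrt (L / m))))"
proof -
  note m = assms(1,2)
  define r where "r = sqrt (L / m)"
  have Lm: "L / m > 0" using m by simp
  have r0: "r > 0" unfolding r_def using Lm by simp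
  have r2: "r^2 = L / m" unfolding r_def using Lm by simp
  have rL: "L = r^2 * m" using r2 m by (simp add: field_simps)
  have P1: "\<forall>v \<in> {0..1}. agf_exp_stable n m L (1 / L) (1 + (v - 2) / r) (v * r) (1 / r)"
    using suff_gen[OF m r0 rL] by auto
  have P2: "\<forall>\<beta> \<gamma> \<rho>. agf_exp_stable n m L (1 / L) \<beta> \<gamma> \<rho> \<longrightarrow> \<rho> \<le> 1 / r"
    using upper_gen[OF m assms(3,4) r0 rL] by blast
  have P3: "m < L \<longrightarrow> (\<forall>\<beta> \<gamma>. agf_exp_stable n m L (1 / L) \<beta> \<gamma> (1 / r) \<longrightarrow>
          (\<exists>v \<in> {0..1}. \<beta> = 1 + (v - 2) / r \<and> \<gamma> = v * r))"
    using char_gen[OF m(1) _ _ r0 rL] assms(4) by blast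
  have P4: "agf_exp_stable n m L (1 / L) (1 + (0 - 2) / r) (0 * r) (1 / r)"
    using suff_gen[OF m r0 rL, of 0] by simp
  have P5: "4 \<le> L / m \<longrightarrow>
          (let v = (r - 2) / (L / m - 1) in
             v \<in> {0..1} \<and> v * r = 1 + (v - 2) / r \<and>
             agf_exp_stable n m L (1 / L) (1 + (v - 2) / r) (v * r) (1 / r))"
  proof
    assume k4: "4 \<le> L / m"
    have "sqrt 4 \<le> r" unfolding r_def using k4 by (rule real_sqrt_le_mono)
    hence r2': "r \<ge> 2" by simp
    define v where "v = (r - 2) / (L / m - 1)"
    have den: "L / m - 1 = r^2 - 1" using r2 by simp
    have denp: "r^2 - 1 > 0" proof -
      have "r^2 \<ge> 2^2" using r2' by (intro power_mono) auto
      thus ?thesis by simp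
    qed
    have v: "v = (r - 2) / (r^2 - 1)" unfolding v_def den ..
    have v0: "v \<ge> 0" unfolding v using r2' denp by simp
    have "r - 2 \<le> r^2 - 1" using r2' by (simp add: power2_eq_square) (smt (verit) mult_le_cancel_right1)
    hence v1: "v \<le> 1" unfolding v using denp by simp
    have veq: "v * r = 1 + (v - 2) / r"
    proof -
      have "v * (r^2 - 1) = r - 2" unfolding v using denp by simp
      thus ?thesis using r0 by (simp add: field_simps power2_eq_square)
    qed
    show "let v = (r - 2) / (L / m - 1) in
             v \<in> {0..1} \<and> v * r = 1 + (v - 2) / r \<and>
             agf_exp_stable n m L (1 / L) (1 + (v - 2) / r) (v * r) (1 / r)"
      unfolding Let_def v_def[symmetric] using v0 v1 veq suff_gen[OF m r0 rL v0 v1] by simp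
  qed
  show ?thesis using P1 P2 P3 P4 P5 unfolding r_def by blast
qed

end
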